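(* Let $N\cong\mathbb{Z}^n$ be a lattice and let $\Sigma$ be a complete fan in $N_{\mathbb{Q}}$. Assume there exist rays $\rho_1,\ldots,\rho_n\in\Sigma(1)$ such that their primitive generators $B=\{p_1,\ldots,p_n\}$ form a basis of the lattice $N$ and the primitive generators of all remaining rays in $\Sigma(1)$ are contained in the negative octant of $B$. Then $\rho_1,\ldots,\rho_n$ are the extremal rays of a maximal cone $\sigma\in\Sigma$ (i.e. $\operatorname{Cone}(p_1,\ldots,p_n)\in\Sigma$).
   Context: $\Sigma(1)$ is the set of rays of $\Sigma$; $p_i$ denotes the primitive lattice vector on $\rho_i$. For a finite set $S=\{s_1,\ldots,s_k\}\subset N_{\mathbb{Q}}$, its negative octant is $\{\sum_i a_i s_i:\ a_i\in\mathbb{Q},\ a_i\le 0\}$. *)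

theory Defs
  imports "HOL-Analysis.Analysis"
begin

text \<open>We take N = Z^n inside N_Q = Q^n, modelled as rat ^ 'n (n = CARD('n)).\<close>

definition lattice :: "(rat ^ 'n) set" where
  "lattice = {v. \<forall>i. v $ i \<in> \<int>}"

definition qdot :: "rat ^ 'n \<Rightarrow> rat ^ 'n \<Rightarrow> rat" where
  "qdot u v = (\<Sum>i\<in>UNIV. u $ i * v $ i)"

definition cone_gen :: "(rat ^ 'n) set \<Rightarrow> (rat ^ 'n) set" where
  "cone_gen S = {\<Sum>s\<in>S. a s *s s | a. \<forall>s\<in>S. a s \<ge> 0}"

definition neg_octant :: "(rat ^ 'n) set \<Rightarrow> (rat ^ 'n) set" where
  "neg_octant S = {\<Sum>s\<in>S. a s *s s | a. \<forall>s\<in>S. a s \<le> 0}"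

definition polyhedral_cone :: "(rat ^ 'n) set \<Rightarrow> bool" where
  "polyhedral_cone \<sigma> \<longleftrightarrow> (\<exists>S. finite S \<and> \<sigma> = cone_gen S)"

definition strongly_convex :: "(rat ^ 'n) set \<Rightarrow> bool" where
  "strongly_convex \<sigma> \<longleftrightarrow> \<sigma> \<inter> uminus ` \<sigma> = {0}"

definition dual_cone :: "(rat ^ 'n) set \<Rightarrow> (rat ^ 'n) set" where
  "dual_cone \<sigma> = {u. \<forall>v\<in>\<sigma>. qdot u v \<ge> 0}"

definition face_of_cone :: "(rat ^ 'n) set \<Rightarrow> (rat ^ 'n) set \<Rightarrow> bool" where
  "face_of_cone \<tau> \<sigma> \<longleftrightarrow> (\<exists>u\<in>dual_cone \<sigma>. \<tau> = {v\<in>\<sigma>. qdot u v = 0})"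

definition is_fan :: "(rat ^ 'n) set set \<Rightarrow> bool" where
  "is_fan \<Sigma> \<longleftrightarrow> finite \<Sigma>
     \<and> (\<forall>\<sigma>\<in>\<Sigma>. polyhedral_cone \<sigma> \<and> strongly_convex \<sigma>)
     \<and> (\<forall>\<sigma>\<in>\<Sigma>. \<forall>\<tau>. face_of_cone \<tau> \<sigma> \<longrightarrow> \<tau> \<in> \<Sigma>)
     \<and> (\<forall>\<sigma>\<in>\<Sigma>. \<forall>\<tau>\<in>\<Sigma>. face_of_cone (\<sigma> \<inter> \<tau>) \<sigma> \<and> face_of_cone (\<sigma> \<inter> \<tau>) \<tau>)"

definition complete_fan :: "(rat ^ 'n) set set \<Rightarrow> bool" where
  "complete_fan \<Sigma> \<longleftrightarrow> is_fan \<Sigma> \<and> \<Union>\<Sigma> = UNIV"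

definition is_ray :: "(rat ^ 'n) set \<Rightarrow> bool" where
  "is_ray \<rho> \<longleftrightarrow> (\<exists>v. v \<noteq> 0 \<and> \<rho> = {c *s v | c. c \<ge> 0})"

definition rays :: "(rat ^ 'n) set set \<Rightarrow> (rat ^ 'n) set set" where
  "rays \<Sigma> = {\<rho>\<in>\<Sigma>. is_ray \<rho>}"

definition primitive_gen :: "(rat ^ 'n) set \<Rightarrow> rat ^ 'n \<Rightarrow> bool" where
  "primitive_gen \<rho> p \<longleftrightarrow> p \<in> \<rho> \<inter> lattice \<and> p \<noteq> 0
     \<and> (\<forall>q\<in>\<rho> \<inter> lattice. \<exists>k::nat. q = of_nat k *s p)"

definition lattice_basis :: "('n \<Rightarrow> rat ^ 'n) \<Rightarrow> bool" where
  "lattice_basis p \<longleftrightarrow> (\<forall>i. p i \<in> lattice)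
     \<and> (\<forall>c::'n \<Rightarrow> int. (\<Sum>i\<in>UNIV. of_int (c i) *s p i) = 0 \<longrightarrow> (\<forall>i. c i = 0))
     \<and> (\<forall>x\<in>lattice. \<exists>c::'n \<Rightarrow> int. x = (\<Sum>i\<in>UNIV. of_int (c i) *s p i))"

end

theory Submission
  imports Defs
begin

lemma qdot_add_right: "qdot u (x + y) = qdot u x + qdot u y"
  unfolding qdot_def by (simp add: sum.distrib algebra_simps)

lemma qdot_diff_right: "qdot u (x - y) = qdot u x - qdot u y"
  unfolding qdot_def by (simp add: sum_subtractf algebra_simps)

lemma qdot_neg_right: "qdot u (- x) = - qdot u x"
  unfolding qdot_def by (simp add: sum_negf)

lemma qdot_scale_right: "qdot u (c *s x) = c * qdot u x"
  unfolding qdot_def by (simp add: sum_distrib_left algebra_simps)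

lemma qdot_add_left: "qdot (u + v) x = qdot u x + qdot v x"
  unfolding qdot_def by (simp add: sum.distrib algebra_simps)

lemma qdot_diff_left: "qdot (u - v) x = qdot u x - qdot v x"
  unfolding qdot_def by (simp add: sum_subtractf algebra_simps)

lemma qdot_scale_left: "qdot (c *s u) x = c * qdot u x"
  unfolding qdot_def by (simp add: sum_distrib_left algebra_simps)

lemma qdot_sum_right: "qdot u (\<Sum>i\<in>I. f i) = (\<Sum>i\<in>I. qdot u (f i))"
  unfolding qdot_def by (simp add: sum_distrib_left sum.swap[of _ I])

lemma qdot_sum_left: "qdot (\<Sum>i\<in>I. f i) x = (\<Sum>i\<in>I. qdot (f i) x)"
  unfolding qdot_def by (simp add: sum_distrib_right sum.swap[of _ I])

lemma qdot_self_neg: "(b::rat^'n) \<noteq> 0 \<Longrightarrow> qdot (- b) b < 0"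
proof -
  assume "b \<noteq> 0"
  then obtain i where i: "b $ i \<noteq> 0" by (auto simp: vec_eq_iff)
  have "0 < (\<Sum>j\<in>UNIV. b $ j * b $ j)"
  proof (rule sum_pos2[of UNIV i])
    show "0 < b $ i * b $ i" using i by (auto simp: zero_less_mult_iff linorder_neq_iff)
  qed auto
  then show ?thesis unfolding qdot_def by (simp add: sum_negf)
qed


lemma smult_sum: "(c::rat) *s (\<Sum>i\<in>A. f i) = (\<Sum>i\<in>A. c *s f i)"
  by (simp add: vec_eq_iff sum_distrib_left)

lemma sum_smult_left: "(\<Sum>i\<in>A. c i) *s (x::rat^'n) = (\<Sum>i\<in>A. c i *s x)"
  by (simp add: vec_eq_iff sum_distrib_right)

lemma cone_gen_zero: "0 \<in> cone_gen S"
  unfolding cone_gen_def by (rule CollectI, rule exI[of _ "\<lambda>_. 0"]) simp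

lemma cone_gen_mem:
  assumes "finite S" "s \<in> S" shows "s \<in> cone_gen S"
proof -
  have "(\<Sum>t\<in>S. (if t = s then 1 else 0) *s t) = (\<Sum>t\<in>S. if t = s then s else 0)"
    by (rule sum.cong) auto
  also have "\<dots> = s" using assms by (simp add: sum.delta)
  finally show ?thesis unfolding cone_gen_def
    by (intro CollectI exI[of _ "\<lambda>t. if t = s then 1 else (0::rat)"]) auto
qed

lemma cone_gen_add:
  assumes "x \<in> cone_gen S" "y \<in> cone_gen S" shows "x + y \<in> cone_gen S"
proof -
  obtain a where a: "\<forall>s\<in>S. a s \<ge> 0" "x = (\<Sum>s\<in>S. a s *s s)" using assms(1) unfolding cone_gen_def by auto
  obtain b where b: "\<forall>s\<in>S. b s \<ge> 0" "y = (\<Sum>s\<in>S. b s *s s)" using assms(2) unfolding cone_gen_def by auto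
  have "x + y = (\<Sum>s\<in>S. (a s + b s) *s s)"
    using a b by (simp add: vector_sadd_rdistrib sum.distrib)
  then show ?thesis using a b unfolding cone_gen_def
    by (intro CollectI exI[of _ "\<lambda>s. a s + b s"]) auto
qed

lemma cone_gen_scale:
  assumes "x \<in> cone_gen S" "c \<ge> 0" shows "c *s x \<in> cone_gen S"
proof -
  obtain a where a: "\<forall>s\<in>S. a s \<ge> 0" "x = (\<Sum>s\<in>S. a s *s s)" using assms(1) unfolding cone_gen_def by auto
  have "c *s x = (\<Sum>s\<in>S. (c * a s) *s s)"
    using a by (simp add: smult_sum vector_smult_assoc)
  then show ?thesis using a assms(2) unfolding cone_gen_def
    by (intro CollectI exI[of _ "\<lambda>s. c * a s"]) auto
qed

lemma cone_gen_sum: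
  assumes "finite A" "\<forall>i\<in>A. f i \<in> cone_gen S" shows "(\<Sum>i\<in>A. f i) \<in> cone_gen S"
  using assms by (induct A rule: finite_induct) (auto intro: cone_gen_zero cone_gen_add)

lemma cone_gen_subset:
  assumes "finite A" "\<forall>s\<in>A. s \<in> cone_gen B" shows "cone_gen A \<subseteq> cone_gen B"
proof
  fix x assume "x \<in> cone_gen A"
  then obtain a where a: "\<forall>s\<in>A. a s \<ge> 0" "x = (\<Sum>s\<in>A. a s *s s)" unfolding cone_gen_def by auto
  show "x \<in> cone_gen B" unfolding a(2)
    using assms a(1) by (intro cone_gen_sum) (auto intro: cone_gen_scale)
qed

lemma cone_gen_mono:
  assumes "finite B" "A \<subseteq> B" shows "cone_gen A \<subseteq> cone_gen B"
  using assms by (intro cone_gen_subset) (auto intro: finite_subset cone_gen_mem)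

lemma cone_gen_remove:
  assumes "finite T" "s \<in> T" "s \<in> cone_gen (T - {s})"
  shows "cone_gen T = cone_gen (T - {s})"
proof
  show "cone_gen T \<subseteq> cone_gen (T - {s})"
    using assms by (intro cone_gen_subset) (auto intro: cone_gen_mem)
  show "cone_gen (T - {s}) \<subseteq> cone_gen T"
    using assms by (intro cone_gen_mono) auto
qed


section \<open>Farkas lemma\<close>

lemma farkas_aux:
  fixes I :: "'i set"
  assumes "finite I"
  shows "\<forall>(g::'i \<Rightarrow> rat^'n) b. (\<nexists>l. (\<forall>i\<in>I. l i \<ge> 0) \<and> b = (\<Sum>i\<in>I. l i *s g i)) \<longrightarrow>
           (\<exists>u. (\<forall>i\<in>I. qdot u (g i) \<ge> 0) \<and> qdot u b < 0)"
  using assms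
proof (induct I rule: finite_induct)
  case empty
  show ?case
  proof (intro allI impI)
    fix g :: "'i \<Rightarrow> rat^'n" and b :: "rat^'n"
    assume "\<nexists>l. (\<forall>i\<in>{}. l i \<ge> 0) \<and> b = (\<Sum>i\<in>{}. l i *s g i)"
    then have "b \<noteq> 0" by auto
    then show "\<exists>u. (\<forall>i\<in>{}. qdot u (g i) \<ge> 0) \<and> qdot u b < 0"
      using qdot_self_neg by blast
  qed
next
  case (insert j I)
  show ?case
  proof (intro allI impI)
    fix g :: "'i \<Rightarrow> rat^'n" and b :: "rat^'n"
    assume nb: "\<nexists>l. (\<forall>i\<in>insert j I. l i \<ge> 0) \<and> b = (\<Sum>i\<in>insert j I. l i *s g i)"
    have nbI: "\<nexists>l. (\<forall>i\<in>I. l i \<ge> 0) \<and> b = (\<Sum>i\<in>I. l i *s g i)"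
    proof
      assume "\<exists>l. (\<forall>i\<in>I. l i \<ge> 0) \<and> b = (\<Sum>i\<in>I. l i *s g i)"
      then obtain l where l: "\<forall>i\<in>I. l i \<ge> 0" "b = (\<Sum>i\<in>I. l i *s g i)" by blast
      define l' where "l' = l(j := 0)"
      have "(\<Sum>i\<in>insert j I. l' i *s g i) = (\<Sum>i\<in>I. l' i *s g i)"
        using insert by (simp add: l'_def)
      also have "\<dots> = (\<Sum>i\<in>I. l i *s g i)"
        using insert by (intro sum.cong) (auto simp: l'_def)
      finally have "b = (\<Sum>i\<in>insert j I. l' i *s g i)" using l by simp
      moreover have "\<forall>i\<in>insert j I. l' i \<ge> 0" using l by (simp add: l'_def)
      ultimately show False using nb by blast
    qed
    then obtain u where u: "\<forall>i\<in>I. qdot u (g i) \<ge> 0" "qdot u b < 0"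
      using insert.hyps(3) by blast
    show "\<exists>u. (\<forall>i\<in>insert j I. qdot u (g i) \<ge> 0) \<and> qdot u b < 0"
    proof (cases "qdot u (g j) \<ge> 0")
      case True
      then show ?thesis using u by auto
    next
      case False
      define a where "a = g j"
      define ua where "ua = qdot u a"
      have ua: "ua < 0" using False by (simp add: ua_def a_def)
      define g' where "g' = (\<lambda>i. g i - (qdot u (g i) / ua) *s a)"
      define b' where "b' = b - (qdot u b / ua) *s a"
      have nb': "\<nexists>l. (\<forall>i\<in>I. l i \<ge> 0) \<and> b' = (\<Sum>i\<in>I. l i *s g' i)"
      proof
        assume "\<exists>l. (\<forall>i\<in>I. l i \<ge> 0) \<and> b' = (\<Sum>i\<in>I. l i *s g' i)"
        then obtain l where l: "\<forall>i\<in>I. l i \<ge> 0" "b' = (\<Sum>i\<in>I. l i *s g' i)" by blast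
        define m where "m = (qdot u b - (\<Sum>i\<in>I. l i * qdot u (g i))) / ua"
        have "(\<Sum>i\<in>I. l i * qdot u (g i)) \<ge> 0"
          using l(1) u(1) by (intro sum_nonneg) auto
        then have "qdot u b - (\<Sum>i\<in>I. l i * qdot u (g i)) < 0" using u(2) by linarith
        then have m0: "m \<ge> 0" unfolding m_def using ua
          by (intro divide_nonpos_neg) linarith+
        have e1: "(\<Sum>i\<in>I. l i *s g' i) = (\<Sum>i\<in>I. l i *s g i) - ((\<Sum>i\<in>I. l i * qdot u (g i)) / ua) *s a"
          unfolding g'_def
          apply (simp add: vec_eq_iff sum_subtractf sum_distrib_right sum_divide_distrib algebra_simps)
          apply (simp add: sum_distrib_left)
          apply (auto intro!: sum.cong simp: algebra_simps)
          done
        have "b = b' + (qdot u b / ua) *s a" unfolding b'_def by simp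
        also have "\<dots> = (\<Sum>i\<in>I. l i *s g i) + m *s a"
          unfolding l(2) e1 m_def by (simp add: vec_eq_iff diff_divide_distrib algebra_simps)
        also have "\<dots> = (\<Sum>i\<in>insert j I. (l(j := m)) i *s g i)"
        proof -
          have "(\<Sum>i\<in>I. (l(j := m)) i *s g i) = (\<Sum>i\<in>I. l i *s g i)"
            using insert by (intro sum.cong) auto
          then show ?thesis using insert by (simp add: a_def add.commute)
        qed
        finally have "b = (\<Sum>i\<in>insert j I. (l(j := m)) i *s g i)" .
        moreover have "\<forall>i\<in>insert j I. (l(j := m)) i \<ge> 0" using l(1) m0 by auto
        ultimately show False using nb by blast
      qed
      then obtain w where w: "\<forall>i\<in>I. qdot w (g' i) \<ge> 0" "qdot w b' < 0"
        using insert.hyps(3) by blast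
      define u' where "u' = w - (qdot w a / ua) *s u"
      have key: "qdot u' x = qdot w (x - (qdot u x / ua) *s a)" for x
        unfolding u'_def using ua
        by (simp add: qdot_diff_left qdot_diff_right qdot_scale_left qdot_scale_right field_simps)
      have "\<forall>i\<in>insert j I. qdot u' (g i) \<ge> 0"
      proof
        fix i assume "i \<in> insert j I"
        then show "qdot u' (g i) \<ge> 0"
        proof
          assume "i = j"
          have "g j - (qdot u (g j) / ua) *s a = 0" using ua by (simp add: a_def ua_def)
          then show ?thesis using \<open>i = j\<close> unfolding key by (simp add: qdot_def)
        next
          assume "i \<in> I"
          then show ?thesis using w(1) unfolding key g'_def by auto
        qed
      qed
      moreover have "qdot u' b < 0" using w(2) unfolding key b'_def .
      ultimately show ?thesis by blast
    qed
  qed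
qed

lemma farkas:
  assumes "finite T" "b \<notin> cone_gen T"
  shows "\<exists>u. (\<forall>t\<in>T. qdot u t \<ge> 0) \<and> qdot u b < 0"
proof -
  have "\<nexists>l. (\<forall>i\<in>T. l i \<ge> 0) \<and> b = (\<Sum>i\<in>T. l i *s id i)"
    using assms(2) unfolding cone_gen_def by auto
  then show ?thesis using farkas_aux[OF assms(1), rule_format, where g=id and b=b] by auto
qed


section \<open>Irredundant generators span faces\<close>

lemma sc_zero:
  assumes "strongly_convex \<sigma>" "x \<in> \<sigma>" "- x \<in> \<sigma>" shows "x = 0"
proof -
  have "x \<in> uminus ` \<sigma>" using assms(3) by (auto intro: image_eqI[of _ _ "- x"])
  then have "x \<in> \<sigma> \<inter> uminus ` \<sigma>" using assms(2) by blast
  then show ?thesis using assms(1) unfolding strongly_convex_def by blast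
qed

lemma irredundant_face:
  assumes fin: "finite S" and irr: "\<forall>s\<in>S. s \<notin> cone_gen (S - {s})"
    and sc: "strongly_convex (cone_gen S)" and sS: "s \<in> S"
  shows "face_of_cone {c *s s | c. c \<ge> 0} (cone_gen S)"
proof -
  define \<sigma> where "\<sigma> = cone_gen S"
  have memS: "r \<in> \<sigma>" if "r \<in> S" for r using cone_gen_mem[OF fin that] by (simp add: \<sigma>_def)
  have subS: "cone_gen (S - {s}) \<subseteq> \<sigma>" unfolding \<sigma>_def using fin by (intro cone_gen_mono) auto
  have s0: "s \<noteq> 0" using irr sS cone_gen_zero by metis
  have nsS: "- s \<notin> S"
  proof
    assume "- s \<in> S"
    then have "s = 0" using sc_zero[OF sc[folded \<sigma>_def] memS[OF sS]] memS by blast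
    then show False using s0 by simp
  qed
  have nt: "- t \<notin> cone_gen (insert (- s) S)" if tS: "t \<in> S - {s}" for t
  proof
    assume "- t \<in> cone_gen (insert (- s) S)"
    then obtain a where a: "\<forall>r\<in>insert (- s) S. a r \<ge> 0" "- t = (\<Sum>r\<in>insert (- s) S. a r *s r)"
      unfolding cone_gen_def by auto
    define z' where "z' = (\<Sum>r\<in>S - {s}. a r *s r)"
    have z'c: "z' \<in> cone_gen (S - {s})" unfolding z'_def cone_gen_def using a(1) by auto
    have "- t = a (- s) *s (- s) + (\<Sum>r\<in>S. a r *s r)"
      using a(2) fin nsS by simp
    also have "(\<Sum>r\<in>S. a r *s r) = a s *s s + z'"
      unfolding z'_def using fin sS by (simp add: sum.remove)
    finally have eq: "- t = (a s - a (- s)) *s s + z'"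
      by (simp add: vec_eq_iff algebra_simps)
    define e where "e = a s - a (- s)"
    show False
    proof (cases "e \<ge> 0")
      case True
      have "e *s s + z' \<in> \<sigma>" using True memS[OF sS] subS z'c unfolding \<sigma>_def
        by (intro cone_gen_add cone_gen_scale) auto
      then have "- t \<in> \<sigma>" using eq by (simp add: e_def)
      then have "t = 0" using sc_zero[OF sc[folded \<sigma>_def]] memS tS by blast
      then show False using irr tS cone_gen_zero by auto
    next
      case False
      have "t \<in> cone_gen (S - {s})" using tS fin by (intro cone_gen_mem) auto
      then have "z' + t \<in> cone_gen (S - {s})" using z'c by (intro cone_gen_add)
      moreover have "z' + t = (- e) *s s" using eq by (simp add: e_def vec_eq_iff algebra_simps)
      ultimately have "(1 / (- e)) *s ((- e) *s s) \<in> cone_gen (S - {s})"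
        using False by (metis cone_gen_scale divide_nonneg_nonneg linorder_not_le neg_0_le_iff_le order_le_less zero_le_one)
      then have "s \<in> cone_gen (S - {s})" using False by (simp add: vector_smult_assoc)
      then show False using irr sS by blast
    qed
  qed
  have "\<forall>t\<in>S - {s}. \<exists>u. (\<forall>r\<in>insert (- s) S. qdot u r \<ge> 0) \<and> qdot u (- t) < 0"
    using nt fin by (intro ballI farkas) auto
  then obtain U where U: "\<And>t. t \<in> S - {s} \<Longrightarrow> (\<forall>r\<in>insert (- s) S. qdot (U t) r \<ge> 0) \<and> qdot (U t) (- t) < 0"
    by metis
  define u where "u = (\<Sum>t\<in>S - {s}. U t)"
  have Us: "qdot (U t) s = 0" if "t \<in> S - {s}" for t
    using U[OF that] sS by (auto simp: qdot_neg_right)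
  have uS: "qdot u r \<ge> 0" if "r \<in> S" for r
    unfolding u_def qdot_sum_left using U that by (intro sum_nonneg) auto
  have us: "qdot u s = 0" unfolding u_def qdot_sum_left using Us by simp
  have ut: "qdot u t > 0" if tS: "t \<in> S - {s}" for t
    unfolding u_def qdot_sum_left
  proof (rule sum_pos2[OF _ tS])
    show "finite (S - {s})" using fin by simp
    show "0 < qdot (U t) t" using U[OF tS] by (simp add: qdot_neg_right)
    show "\<And>i. i \<in> S - {s} \<Longrightarrow> 0 \<le> qdot (U i) t" using U tS by auto
  qed
  have dual: "u \<in> dual_cone \<sigma>"
    unfolding dual_cone_def
  proof (intro CollectI ballI)
    fix v assume "v \<in> \<sigma>"
    then obtain a where a: "\<forall>r\<in>S. a r \<ge> 0" "v = (\<Sum>r\<in>S. a r *s r)"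
      unfolding \<sigma>_def cone_gen_def by auto
    show "qdot u v \<ge> 0" unfolding a(2) qdot_sum_right qdot_scale_right
      using a(1) uS by (intro sum_nonneg) auto
  qed
  have "{c *s s | c. c \<ge> 0} = {v\<in>\<sigma>. qdot u v = 0}"
  proof
    show "{c *s s | c. c \<ge> 0} \<subseteq> {v\<in>\<sigma>. qdot u v = 0}"
    proof
      fix v assume "v \<in> {c *s s | c. c \<ge> 0}"
      then obtain c where c: "c \<ge> 0" "v = c *s s" by auto
      have "v \<in> \<sigma>" unfolding c(2) \<sigma>_def using c(1) memS[OF sS]
        by (intro cone_gen_scale) (auto simp: \<sigma>_def)
      then show "v \<in> {v\<in>\<sigma>. qdot u v = 0}" using us c by (simp add: qdot_scale_right)
    qed
  next
    show "{v\<in>\<sigma>. qdot u v = 0} \<subseteq> {c *s s | c. c \<ge> 0}"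
    proof
      fix v assume v: "v \<in> {v\<in>\<sigma>. qdot u v = 0}"
      then obtain a where a: "\<forall>r\<in>S. a r \<ge> 0" "v = (\<Sum>r\<in>S. a r *s r)"
        unfolding \<sigma>_def cone_gen_def by auto
      have "qdot u v = 0" using v by simp
      then have "(\<Sum>r\<in>S. a r * qdot u r) = 0" unfolding a(2) qdot_sum_right qdot_scale_right .
      moreover have "\<forall>r\<in>S. a r * qdot u r \<ge> 0" using a(1) uS by auto
      ultimately have z: "\<forall>r\<in>S. a r * qdot u r = 0" using fin by (simp add: sum_nonneg_eq_0_iff)
      have ar: "a r = 0" if "r \<in> S - {s}" for r using z ut[OF that] that by auto
      have "v = a s *s s + (\<Sum>r\<in>S - {s}. a r *s r)" unfolding a(2) using fin sS by (simp add: sum.remove)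
      also have "(\<Sum>r\<in>S - {s}. a r *s r) = 0" using ar by simp
      finally show "v \<in> {c *s s | c. c \<ge> 0}" using a(1) sS by auto
    qed
  qed
  then show ?thesis using dual unfolding face_of_cone_def \<sigma>_def by blast
qed


lemma exists_irredundant:
  assumes "finite S"
  shows "\<exists>S'\<subseteq>S. cone_gen S' = cone_gen S \<and> (\<forall>s\<in>S'. s \<notin> cone_gen (S' - {s}))"
  using assms
proof (induction "card S" arbitrary: S rule: less_induct)
  case less
  show ?case
  proof (cases "\<forall>s\<in>S. s \<notin> cone_gen (S - {s})")
    case True
    then show ?thesis by blast
  next
    case False
    then obtain s where s: "s \<in> S" "s \<in> cone_gen (S - {s})" by blast
    have eq: "cone_gen S = cone_gen (S - {s})" using cone_gen_remove[OF less.prems s] .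
    have "card (S - {s}) < card S" using s(1) less.prems by (metis card_Diff1_less)
    then obtain S' where "S' \<subseteq> S - {s}" "cone_gen S' = cone_gen (S - {s})"
      "\<forall>s\<in>S'. s \<notin> cone_gen (S' - {s})"
      using less.hyps[of "S - {s}"] less.prems by auto
    then show ?thesis using eq by blast
  qed
qed

section \<open>Denominators and lattice facts\<close>

lemma common_denom:
  fixes r :: "'n::finite \<Rightarrow> rat"
  shows "\<exists>D::rat. D > 0 \<and> (\<forall>i. D * r i \<in> \<int>)"
proof -
  define den where "den i = snd (quotient_of (r i))" for i
  define num where "num i = fst (quotient_of (r i))" for i
  have denpos: "den i > 0" for i unfolding den_def by (rule quotient_of_denom_pos')
  have rdiv: "r i = of_int (num i) / of_int (den i)" for i
    unfolding num_def den_def by (rule quotient_of_div) simp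
  define D where "D = (\<Prod>i\<in>UNIV. (of_int (den i) :: rat))"
  have "D > 0" unfolding D_def using denpos by (intro prod_pos) auto
  moreover have "D * r i \<in> \<int>" for i
  proof -
    have "D = of_int (den i) * (\<Prod>j\<in>UNIV - {i}. of_int (den j))"
      unfolding D_def by (simp add: prod.remove)
    then have "D * r i = of_int (num i) * (\<Prod>j\<in>UNIV - {i}. of_int (den j))"
      using denpos[of i] by (simp add: rdiv)
    also have "\<dots> \<in> \<int>" by (intro Ints_mult Ints_prod) auto
    finally show ?thesis .
  qed
  ultimately show ?thesis by blast
qed

lemma basis_indep:
  fixes p :: "'n \<Rightarrow> rat^'n"
  assumes "lattice_basis p" "(\<Sum>i\<in>UNIV. r i *s p i) = 0"
  shows "r i = 0"
proof -
  obtain D :: rat where D: "D > 0" "\<forall>i. D * r i \<in> \<int>" using common_denom by blast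
  have "\<forall>i. \<exists>c::int. of_int c = D * r i" using D(2) by (metis Ints_cases)
  then obtain c :: "'n \<Rightarrow> int" where c: "\<And>i. of_int (c i) = D * r i" by metis
  have "(\<Sum>i\<in>UNIV. of_int (c i) *s p i) = D *s (\<Sum>i\<in>UNIV. r i *s p i)"
    by (simp add: c smult_sum vector_smult_assoc)
  also have "\<dots> = 0" using assms(2) by simp
  finally have "\<forall>i. c i = 0" using assms(1) unfolding lattice_basis_def by blast
  then have "D * r i = 0" using c[of i] by simp
  then show ?thesis using D(1) by simp
qed

lemma basis_unique:
  fixes p :: "'n \<Rightarrow> rat^'n"
  assumes "lattice_basis p" "(\<Sum>i\<in>UNIV. r i *s p i) = (\<Sum>i\<in>UNIV. r' i *s p i)"
  shows "r i = r' i"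
proof -
  have "(\<Sum>i\<in>UNIV. (r i - r' i) *s p i) = 0"
    using assms(2) by (simp add: vector_sub_rdistrib sum_subtractf)
  then show ?thesis using basis_indep[OF assms(1), of "\<lambda>i. r i - r' i"] by simp
qed

lemma primitive_exists:
  fixes v :: "rat^'n"
  assumes "v \<noteq> 0"
  shows "\<exists>q. primitive_gen {c *s v | c. c \<ge> 0} q"
proof -
  obtain D :: rat where D: "D > 0" "\<forall>i. D * v $ i \<in> \<int>" using common_denom by blast
  have "\<forall>i. \<exists>c::int. of_int c = D * v $ i" using D(2) by (metis Ints_cases)
  then obtain W :: "'n \<Rightarrow> int" where W: "\<And>i. of_int (W i) = D * v $ i" by metis
  define g where "g = Gcd (range W)"
  obtain i0 where i0: "v $ i0 \<noteq> 0" using assms by (auto simp: vec_eq_iff)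
  have "W i0 \<noteq> 0" using W[of i0] D(1) i0 by auto
  then have "g \<noteq> 0" unfolding g_def by auto
  moreover have "g \<ge> 0" unfolding g_def by simp
  ultimately have gpos: "g > 0" by simp
  have gdvd: "g dvd W i" for i unfolding g_def by (rule Gcd_dvd) simp
  define Q where "Q i = W i div g" for i
  have WQ: "W i = g * Q i" for i unfolding Q_def using gdvd[of i] by simp
  define q where "q = (D / of_int g) *s v"
  have qi: "q $ i = of_int (Q i)" for i
  proof -
    have "q $ i = of_int (W i) / of_int g" unfolding q_def using W[of i] by simp
    also have "\<dots> = of_int (Q i)" using gpos by (simp add: WQ)
    finally show ?thesis .
  qed
  define \<rho> where "\<rho> = {c *s v | c. c \<ge> 0}"
  have "q \<in> \<rho>" unfolding \<rho>_def q_def using D(1) gpos by auto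
  moreover have "q \<in> lattice" unfolding lattice_def using qi by simp
  moreover have "q \<noteq> 0" unfolding q_def using D(1) gpos assms by simp
  moreover have "\<forall>z\<in>\<rho> \<inter> lattice. \<exists>k::nat. z = of_nat k *s q"
  proof
    fix z assume z: "z \<in> \<rho> \<inter> lattice"
    then obtain c where c: "c \<ge> 0" "z = c *s v" unfolding \<rho>_def by auto
    define t where "t = c * of_int g / D"
    have zt: "z = t *s q" unfolding c(2) q_def t_def using D(1) gpos
      by (simp add: vector_smult_assoc)
    have t0: "t \<ge> 0" unfolding t_def using c(1) D(1) gpos by simp
    obtain a b where ab: "quotient_of t = (a, b)" by (cases "quotient_of t")
    have bpos: "b > 0" using quotient_of_denom_pos[OF ab] .
    have cop: "coprime b a" using quotient_of_coprime[OF ab] by (simp add: coprime_commute)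
    have tab: "t = of_int a / of_int b" using quotient_of_div[OF ab] .
    have "b dvd Q i" for i
    proof -
      have zI: "z $ i \<in> \<int>" using z unfolding lattice_def by auto
      have "z $ i = (of_int (a * Q i) :: rat) / of_int b" unfolding zt tab by (simp add: qi)
      then have "(of_int (a * Q i) :: rat) / of_int b \<in> \<int>" using zI by simp
      then have "b = 0 \<or> b dvd a * Q i" by (simp only: of_int_div_of_int_in_Ints_iff)
      then have "b dvd a * Q i" using bpos by auto
      then show ?thesis using coprime_dvd_mult_right_iff[OF cop] by simp
    qed
    then have "b * g dvd W i" for i unfolding WQ by (simp add: mult.commute mult_dvd_mono)
    then have "b * g dvd g" unfolding g_def by (intro Gcd_greatest) auto
    then have "b * g dvd 1 * g" by simp
    then have "b dvd 1" using gpos by (subst (asm) dvd_mult_cancel_right) simp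
    then have "b = 1" using bpos by simp
    then have "t = of_int a" using tab by simp
    then have "a \<ge> 0" using t0 by simp
    then have "t = of_nat (nat a)" using \<open>t = of_int a\<close> by simp
    then show "\<exists>k::nat. z = of_nat k *s q" using zt by blast
  qed
  ultimately show ?thesis unfolding primitive_gen_def \<rho>_def by blast
qed


lemma delta_sum:
  fixes p :: "'n::finite \<Rightarrow> rat^'m"
  shows "(\<Sum>j\<in>UNIV. (if j = i then c else 0) *s p j) = c *s p i"
proof -
  have "(\<Sum>j\<in>UNIV. (if j = i then c else 0) *s p j) = (\<Sum>j\<in>UNIV. if j = i then c *s p j else 0)"
    by (rule sum.cong) auto
  also have "\<dots> = c *s p i" by (simp add: sum.delta')
  finally show ?thesis .
qed

lemma basis_inj:
  fixes p :: "'n \<Rightarrow> rat^'n"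
  assumes "lattice_basis p" shows "inj p"
proof (rule injI)
  fix i j assume "p i = p j"
  then have "(\<Sum>k\<in>UNIV. (if k = i then 1 else 0) *s p k) = (\<Sum>k\<in>UNIV. (if k = j then 1 else 0) *s p k)"
    by (simp add: delta_sum)
  from basis_unique[OF assms this, of i] show "i = j" by (cases "i = j") auto
qed

theorem mainTheorem2:
  fixes \<Sigma> :: "(rat ^ 'n) set set"
    and R :: "'n \<Rightarrow> (rat ^ 'n) set"
    and p :: "'n \<Rightarrow> rat ^ 'n"
  assumes "complete_fan \<Sigma>"
    and "\<forall>i. R i \<in> rays \<Sigma>"
    and "\<forall>i. primitive_gen (R i) (p i)"
    and "lattice_basis p"
    and "\<forall>\<rho>\<in>rays \<Sigma>. \<rho> \<notin> range R \<longrightarrow>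
           (\<forall>q. primitive_gen \<rho> q \<longrightarrow> q \<in> neg_octant (range p))"
  shows "cone_gen (range p) \<in> \<Sigma>"
proof -
  note cf = assms(1)[unfolded complete_fan_def is_fan_def]
  have injp: "inj p" using basis_inj[OF assms(4)] .
  define C where "C = cone_gen (range p)"
  define x where "x = (\<Sum>i\<in>UNIV. p i)"
  have "x \<in> \<Union>\<Sigma>" using cf by simp
  then obtain \<sigma> where \<sigma>: "\<sigma> \<in> \<Sigma>" "x \<in> \<sigma>" by blast
  obtain S where S: "finite S" "\<sigma> = cone_gen S" using cf \<sigma>(1) unfolding polyhedral_cone_def by blast
  have sc: "strongly_convex \<sigma>" using cf \<sigma>(1) by blast
  obtain S' where S': "S' \<subseteq> S" "cone_gen S' = \<sigma>" "\<forall>s\<in>S'. s \<notin> cone_gen (S' - {s})"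
    using exists_irredundant[OF S(1)] S(2) by metis
  have finS': "finite S'" using S'(1) S(1) finite_subset by blast
  have memS': "s \<in> \<sigma>" if "s \<in> S'" for s using cone_gen_mem[OF finS' that] S'(2) by simp
  have nz: "s \<noteq> 0" if "s \<in> S'" for s using S'(3) that cone_gen_zero by metis
  have K: "(\<exists>i c. c > 0 \<and> s = c *s p i) \<or> s \<in> neg_octant (range p)" if sS: "s \<in> S'" for s
  proof -
    define \<rho> where "\<rho> = {c *s s | c. c \<ge> 0}"
    have "face_of_cone \<rho> \<sigma>" unfolding \<rho>_def S'(2)[symmetric]
      using irredundant_face[OF finS' S'(3) _ sS] sc S'(2) by simp
    then have "\<rho> \<in> \<Sigma>" using cf \<sigma>(1) by blast
    moreover have "is_ray \<rho>" unfolding is_ray_def \<rho>_def using nz[OF sS] by blast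
    ultimately have \<rho>r: "\<rho> \<in> rays \<Sigma>" unfolding rays_def by blast
    show ?thesis
    proof (cases "\<rho> \<in> range R")
      case True
      then obtain i where i: "\<rho> = R i" by blast
      have "p i \<in> \<rho>" "p i \<noteq> 0" using assms(3) i unfolding primitive_gen_def by auto
      then obtain c where c: "c \<ge> 0" "p i = c *s s" unfolding \<rho>_def by blast
      have "c \<noteq> 0" using c \<open>p i \<noteq> 0\<close> by auto
      then have "s = (1 / c) *s p i" using c by (simp add: vector_smult_assoc)
      moreover have "1 / c > 0" using c(1) \<open>c \<noteq> 0\<close> by simp
      ultimately show ?thesis by blast
    next
      case False
      obtain q where q: "primitive_gen \<rho> q" using primitive_exists[OF nz[OF sS]] unfolding \<rho>_def by blast
      have qn: "q \<in> neg_octant (range p)" using assms(5) \<rho>r False q by blast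
      have "q \<in> \<rho>" "q \<noteq> 0" using q unfolding primitive_gen_def by auto
      then obtain c where c: "c \<ge> 0" "q = c *s s" unfolding \<rho>_def by blast
      have "c \<noteq> 0" using c \<open>q \<noteq> 0\<close> by auto
      then have sq: "s = (1 / c) *s q" using c by (simp add: vector_smult_assoc)
      obtain a where a: "\<forall>t\<in>range p. a t \<le> 0" "q = (\<Sum>t\<in>range p. a t *s t)"
        using qn unfolding neg_octant_def by blast
      have "s = (\<Sum>t\<in>range p. ((1 / c) * a t) *s t)"
        unfolding sq a(2) by (simp add: smult_sum vector_smult_assoc)
      moreover have "\<forall>t\<in>range p. (1 / c) * a t \<le> 0" using a(1) c(1) by (simp add: divide_nonpos_nonneg)
      ultimately have "s \<in> neg_octant (range p)" unfolding neg_octant_def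
        by (intro CollectI exI[of _ "\<lambda>t. 1 / c * a t"]) simp
      then show ?thesis by blast
    qed
  qed
  have "\<forall>s\<in>S'. \<exists>co. s = (\<Sum>j\<in>UNIV. co j *s p j) \<and>
     ((\<exists>i c. c > 0 \<and> co = (\<lambda>j. if j = i then c else 0)) \<or> (\<forall>j. co j \<le> 0))"
  proof
    fix s assume sS: "s \<in> S'"
    from K[OF sS] show "\<exists>co. s = (\<Sum>j\<in>UNIV. co j *s p j) \<and>
     ((\<exists>i c. c > 0 \<and> co = (\<lambda>j. if j = i then c else 0)) \<or> (\<forall>j. co j \<le> 0))"
    proof
      assume "\<exists>i c. c > 0 \<and> s = c *s p i"
      then obtain i c where "c > 0" "s = c *s p i" by blast
      then show ?thesis by (intro exI[of _ "\<lambda>j. if j = i then c else 0"]) (auto simp: delta_sum)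
    next
      assume "s \<in> neg_octant (range p)"
      then obtain a where a: "\<forall>t\<in>range p. a t \<le> 0" "s = (\<Sum>t\<in>range p. a t *s t)"
        unfolding neg_octant_def by blast
      have "s = (\<Sum>j\<in>UNIV. a (p j) *s p j)" unfolding a(2) using injp
        by (simp add: sum.reindex)
      then show ?thesis using a(1) by (intro exI[of _ "\<lambda>j. a (p j)"]) auto
    qed
  qed
  from bchoice[OF this] obtain co where co0: "\<forall>s\<in>S'. s = (\<Sum>j\<in>UNIV. co s j *s p j) \<and>
     ((\<exists>i c. c > 0 \<and> co s = (\<lambda>j. if j = i then c else 0)) \<or> (\<forall>j. co s j \<le> 0))"
    by blast
  have co: "s = (\<Sum>j\<in>UNIV. co s j *s p j) \<and>
     ((\<exists>i c. c > 0 \<and> co s = (\<lambda>j. if j = i then c else 0)) \<or> (\<forall>j. co s j \<le> 0))"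
    if "s \<in> S'" for s using co0 that by blast
  obtain l where l: "\<forall>s\<in>S'. l s \<ge> 0" "x = (\<Sum>s\<in>S'. l s *s s)"
    using \<sigma>(2) S'(2) unfolding cone_gen_def by auto
  have "x = (\<Sum>s\<in>S'. l s *s (\<Sum>j\<in>UNIV. co s j *s p j))"
    unfolding l(2) using co by (intro sum.cong) auto
  also have "\<dots> = (\<Sum>s\<in>S'. \<Sum>j\<in>UNIV. (l s * co s j) *s p j)"
    by (simp add: smult_sum vector_smult_assoc)
  also have "\<dots> = (\<Sum>j\<in>UNIV. \<Sum>s\<in>S'. (l s * co s j) *s p j)"
    by (rule sum.swap)
  also have "\<dots> = (\<Sum>j\<in>UNIV. (\<Sum>s\<in>S'. l s * co s j) *s p j)"
    by (simp add: sum_smult_left)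
  finally have xe: "(\<Sum>j\<in>UNIV. (\<lambda>_. 1) j *s p j) = (\<Sum>j\<in>UNIV. (\<lambda>j. \<Sum>s\<in>S'. l s * co s j) j *s p j)"
    unfolding x_def by simp
  have one: "(\<Sum>s\<in>S'. l s * co s i) = 1" for i
    using basis_unique[OF assms(4) xe, of i] by simp
  have pin: "p i \<in> \<sigma>" for i
  proof -
    have "\<exists>s\<in>S'. l s * co s i > 0"
    proof (rule ccontr)
      assume "\<not> ?thesis"
      then have "(\<Sum>s\<in>S'. l s * co s i) \<le> 0" by (intro sum_nonpos) auto
      then show False using one[of i] by simp
    qed
    then obtain s where sS: "s \<in> S'" and pos: "l s * co s i > 0" by blast
    have cpos: "co s i > 0" using pos l(1) sS by (auto simp: zero_less_mult_iff)
    have "\<not> (\<forall>j. co s j \<le> 0)" using cpos by (auto simp: not_le)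
    then have "\<exists>i c. c > 0 \<and> co s = (\<lambda>j. if j = i then c else 0)" using co[OF sS] by blast
    then obtain i' c where ic: "c > 0" "co s = (\<lambda>j. if j = i' then c else 0)" by blast
    have "i' = i" using ic cpos by (cases "i' = i") auto
    then have "s = c *s p i" using co[OF sS] ic by (simp add: delta_sum)
    then have "p i = (1 / c) *s s" using ic(1) by (simp add: vector_smult_assoc)
    then show ?thesis using memS'[OF sS] ic(1) S'(2) cone_gen_scale[of s S' "1 / c"] by simp
  qed
  have Csub: "C \<subseteq> \<sigma>" unfolding C_def S'(2)[symmetric] using pin S'(2)
    by (intro cone_gen_subset) auto
  have "\<forall>s\<in>S'. s \<in> C"
  proof
    fix s assume sS: "s \<in> S'"
    from K[OF sS] show "s \<in> C"
    proof
      assume "\<exists>i c. c > 0 \<and> s = c *s p i"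
      then obtain i c where "c > 0" "s = c *s p i" by blast
      moreover have "p i \<in> cone_gen (range p)" by (rule cone_gen_mem) auto
      ultimately show ?thesis unfolding C_def using cone_gen_scale[of "p i" "range p" c] by simp
    next
      assume "s \<in> neg_octant (range p)"
      then obtain a where a: "\<forall>t\<in>range p. a t \<le> 0" "s = (\<Sum>t\<in>range p. a t *s t)"
        unfolding neg_octant_def by blast
      have "- s = (\<Sum>t\<in>range p. (- a t) *s t)" unfolding a(2)
        by (simp add: vec_eq_iff sum_negf)
      then have "- s \<in> C" unfolding C_def cone_gen_def using a(1)
        by (intro CollectI exI[of _ "\<lambda>t. - a t"]) simp
      then have "- s \<in> \<sigma>" using Csub by blast
      then have "s = 0" using sc_zero[OF sc memS'[OF sS]] by simp
      then show ?thesis using nz[OF sS] by simp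
    qed
  qed
  then have "\<sigma> \<subseteq> C" unfolding S'(2)[symmetric] C_def using finS' by (intro cone_gen_subset) auto
  then have "\<sigma> = C" using Csub by blast
  then show ?thesis using \<sigma>(1) C_def by simp
qed

end
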